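(* Let $n\ge 3$, let $t$ be an indeterminate, and let $\rho'_S: SB_n\to GL_n(\mathbb{Z}[t^{\pm1}])$ be any representation extending the standard representation $\rho_S: B_n\to GL_n(\mathbb{Z}[t^{\pm1}])$ (equivalently, by the classification of such extensions, one given for some $a,c\in\mathbb{Z}[t^{\pm1}]$ by $\rho'_S(\sigma_i)=\mathrm{diag}(I_{i-1},\begin{pmatrix}0&t\\1&0\end{pmatrix},I_{n-i-1})$ and $\rho'_S(\tau_i)=\mathrm{diag}(I_{i-1},\begin{pmatrix}a&ct\\c&a\end{pmatrix},I_{n-i-1})$). Then $\rho'_S$ is not faithful.
   Context: $I_r$ is the $r\times r$ identity matrix. $B_n$ is the braid group with generators $\sigma_1,\dots,\sigma_{n-1}$ and relations $\sigma_i\sigma_{i+1}\sigma_i=\sigma_{i+1}\sigma_i\sigma_{i+1}$, $\sigma_i\sigma_j=\sigma_j\sigma_i$ ($|i-j|\ge2$). The singular braid group $SB_n\supset B_n$ is generated by $\sigma_1,\dots,\sigma_{n-1},\tau_1,\dots,\tau_{n-1}$ subject to the braid relations together with $\tau_i\tau_j=\tau_j\tau_i$, $\tau_i\sigma_j=\sigma_j\tau_i$ ($|i-j|\ge2$), $\tau_i\sigma_i=\sigma_i\tau_i$, $\sigma_i\sigma_{i+1}\tau_i=\tau_{i+1}\sigma_i\sigma_{i+1}$, $\sigma_{i+1}\sigma_i\tau_{i+1}=\tau_i\sigma_{i+1}\sigma_i$. The standard representation $\rho_S$ sends $\sigma_i$ to $\mathrm{diag}(I_{i-1},\begin{pmatrix}0&t\\1&0\end{pmatrix},I_{n-i-1})$.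 *)

theory Defs
  imports "HOL-Computational_Algebra.Polynomial" "HOL-Computational_Algebra.Fraction_Field"
          "Jordan_Normal_Form.Matrix"
begin

text \<open>Coefficient field: rational functions over the integers; the Laurent
polynomial ring Z[t, t^-1] is the subring laurent_ring.\<close>

type_synonym ratfun = "int poly fract"

definition tt :: ratfun where "tt = Fract [:0, 1:] 1"

definition laurent_ring :: "ratfun set" where
  "laurent_ring = {Fract p ([:0, 1:] ^ k) | p k. True}"

text \<open>Generators of SB_n (1-based indices), letters = generator + inversion flag.\<close>
datatype gen = Sig nat | Tau nat

type_synonym letter = "gen \<times> bool"

fun gidx :: "gen \<Rightarrow> nat" where
  "gidx (Sig i) = i" | "gidx (Tau i) = i"

definition valid_word :: "nat \<Rightarrow> letter list \<Rightarrow> bool" where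
  "valid_word n w \<longleftrightarrow> (\<forall>x\<in>set w. 1 \<le> gidx (fst x) \<and> gidx (fst x) \<le> n - 1)"

abbreviation "s i \<equiv> (Sig i, False)"
abbreviation "ta i \<equiv> (Tau i, False)"

inductive sb_rel :: "nat \<Rightarrow> letter list \<Rightarrow> letter list \<Rightarrow> bool" for n where
  cancel: "1 \<le> gidx g \<Longrightarrow> gidx g \<le> n - 1 \<Longrightarrow> sb_rel n [(g, b), (g, \<not> b)] []"
| braid3: "1 \<le> i \<Longrightarrow> i + 1 \<le> n - 1 \<Longrightarrow> sb_rel n [s i, s (i+1), s i] [s (i+1), s i, s (i+1)]"
| ss_comm: "1 \<le> i \<Longrightarrow> i \<le> n - 1 \<Longrightarrow> 1 \<le> j \<Longrightarrow> j \<le> n - 1 \<Longrightarrow> i + 2 \<le> j \<or> j + 2 \<le> i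
     \<Longrightarrow> sb_rel n [s i, s j] [s j, s i]"
| tt_comm: "1 \<le> i \<Longrightarrow> i \<le> n - 1 \<Longrightarrow> 1 \<le> j \<Longrightarrow> j \<le> n - 1 \<Longrightarrow> i + 2 \<le> j \<or> j + 2 \<le> i
     \<Longrightarrow> sb_rel n [ta i, ta j] [ta j, ta i]"
| ts_comm: "1 \<le> i \<Longrightarrow> i \<le> n - 1 \<Longrightarrow> 1 \<le> j \<Longrightarrow> j \<le> n - 1 \<Longrightarrow> i + 2 \<le> j \<or> j + 2 \<le> i
     \<Longrightarrow> sb_rel n [ta i, s j] [s j, ta i]"
| ts_same: "1 \<le> i \<Longrightarrow> i \<le> n - 1 \<Longrightarrow> sb_rel n [ta i, s i] [s i, ta i]"
| mixed1: "1 \<le> i \<Longrightarrow> i + 1 \<le> n - 1 \<Longrightarrow> sb_rel n [s i, s (i+1), ta i] [ta (i+1), s i, s (i+1)]"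
| mixed2: "1 \<le> i \<Longrightarrow> i + 1 \<le> n - 1 \<Longrightarrow> sb_rel n [s (i+1), s i, ta (i+1)] [ta i, s (i+1), s i]"

inductive sb_eq :: "nat \<Rightarrow> letter list \<Rightarrow> letter list \<Rightarrow> bool" for n where
  step: "sb_rel n l r \<Longrightarrow> sb_eq n (u @ l @ v) (u @ r @ v)"
| refl: "sb_eq n w w"
| sym: "sb_eq n u v \<Longrightarrow> sb_eq n v u"
| trans: "sb_eq n u v \<Longrightarrow> sb_eq n v w \<Longrightarrow> sb_eq n u w"

text \<open>Standard representation matrix of sigma_i (1-based i; 0-based rows i-1, i).\<close>
definition std_sigma :: "nat \<Rightarrow> nat \<Rightarrow> ratfun mat" where
  "std_sigma n i = mat n n (\<lambda>(r, c).
      if r = i - 1 \<and> c = i - 1 then 0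
      else if r = i - 1 \<and> c = i then tt
      else if r = i \<and> c = i - 1 then 1
      else if r = i \<and> c = i then 0
      else if r = c then 1 else 0)"

definition in_GL_laurent :: "nat \<Rightarrow> ratfun mat \<Rightarrow> ratfun mat \<Rightarrow> bool" where
  "in_GL_laurent n A B \<longleftrightarrow> A \<in> carrier_mat n n \<and> B \<in> carrier_mat n n \<and>
     A * B = 1\<^sub>m n \<and> B * A = 1\<^sub>m n \<and>
     (\<forall>r<n. \<forall>c<n. A $$ (r, c) \<in> laurent_ring \<and> B $$ (r, c) \<in> laurent_ring)"

definition word_mat :: "nat \<Rightarrow> (gen \<Rightarrow> ratfun mat) \<Rightarrow> (gen \<Rightarrow> ratfun mat) \<Rightarrow> letter list \<Rightarrow> ratfun mat" where
  "word_mat n rho rhoinv w = foldr (\<lambda>(g, b) M. (if b then rhoinv g else rho g) * M) w (1\<^sub>m n)"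

end

theory Submission
  imports Defs
begin

fun bact :: "letter \<Rightarrow> (nat \<Rightarrow> int) \<Rightarrow> (nat \<Rightarrow> int)" where
  "bact (Sig i, False) f = f(i := 2 * f i - f (Suc i), Suc i := f i)"
| "bact (Sig i, True) f = f(i := f (Suc i), Suc i := 2 * f (Suc i) - f i)"
| "bact (Tau i, b) f = f"

definition wact :: "letter list \<Rightarrow> (nat \<Rightarrow> int) \<Rightarrow> (nat \<Rightarrow> int)" where
  "wact w = foldr (\<lambda>x F. bact x \<circ> F) w id"

lemma wact_append: "wact (u @ v) = wact u \<circ> wact v"
  by (induction u) (auto simp: wact_def)

lemma wact_rel: "sb_rel n l r \<Longrightarrow> wact l = wact r"
proof (induction rule: sb_rel.induct)
  case (cancel g b)
  show ?case by (cases g; cases b) (auto simp: wact_def fun_eq_iff)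
next
  case (braid3 i)
  show ?case by (auto simp: wact_def fun_eq_iff)
next
  case (ss_comm i j)
  then show ?case by (auto simp: wact_def fun_eq_iff)
qed (auto simp: wact_def fun_eq_iff)

lemma wact_eq: "sb_eq n u v \<Longrightarrow> wact u = wact v"
  by (induction rule: sb_eq.induct) (auto simp: wact_append dest: wact_rel)

definition monom :: "nat \<Rightarrow> ratfun mat \<Rightarrow> (nat \<Rightarrow> nat) \<Rightarrow> (nat \<Rightarrow> ratfun) \<Rightarrow> bool" where
  "monom n A p w \<longleftrightarrow> A \<in> carrier_mat n n \<and> (\<forall>r<n. p r < n) \<and>
     (\<forall>r<n. \<forall>c<n. A $$ (r, c) = (if c = p r then w r else 0))"

lemma monom_mult:
  assumes "monom n A p w" "monom n B q v"
  shows "monom n (A * B) (q \<circ> p) (\<lambda>r. w r * v (p r))"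
  unfolding monom_def
proof (intro conjI allI impI)
  show "A * B \<in> carrier_mat n n" using assms by (auto simp: monom_def)
  show "(q \<circ> p) r < n" if "r < n" for r using assms that by (auto simp: monom_def)
  fix r c assume rc: "r < n" "c < n"
  have A: "A \<in> carrier_mat n n" and B: "B \<in> carrier_mat n n" using assms by (auto simp: monom_def)
  have pr: "p r < n" using assms rc by (auto simp: monom_def)
  have "(A * B) $$ (r, c) = (\<Sum>k\<in>{0..<n}. A $$ (r, k) * B $$ (k, c))"
    using A B rc by (simp add: scalar_prod_def times_mat_def)
  also have "\<dots> = (\<Sum>k\<in>{0..<n}. if k = p r then w r * B $$ (k, c) else 0)"
    using assms(1) rc by (intro sum.cong) (auto simp: monom_def)
  also have "\<dots> = w r * B $$ (p r, c)" using pr by simp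
  also have "\<dots> = (if c = (q \<circ> p) r then w r * v (p r) else 0)"
    using assms(2) pr rc by (auto simp: monom_def)
  finally show "(A * B) $$ (r, c) = (if c = (q \<circ> p) r then w r * v (p r) else 0)" .
qed

lemma monom_one: "monom n (1\<^sub>m n) id (\<lambda>_. 1)"
  by (auto simp: monom_def)

definition swp :: "nat \<Rightarrow> nat \<Rightarrow> nat" where
  "swp i r = (if r = i - 1 then i else if r = i then i - 1 else r)"

lemma monom_sigma:
  assumes "1 \<le> i" "i < n"
  shows "monom n (std_sigma n i) (swp i) (\<lambda>r. if r = i - 1 then tt else 1)"
  using assms by (auto simp: monom_def std_sigma_def swp_def)

lemma monom_unique:
  assumes "monom n A p w" "monom n B q v" "\<forall>r<n. p r = q r \<and> w r = v r"
  shows "A = B"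
  using assms by (intro eq_matI) (auto simp: monom_def)

theorem theorem4p4:
  fixes n :: nat and rho rhoinv :: "gen \<Rightarrow> ratfun mat"
  assumes "n \<ge> 3"
    and GL: "\<And>g. 1 \<le> gidx g \<Longrightarrow> gidx g \<le> n - 1 \<Longrightarrow> in_GL_laurent n (rho g) (rhoinv g)"
    and std: "\<And>i. 1 \<le> i \<Longrightarrow> i \<le> n - 1 \<Longrightarrow> rho (Sig i) = std_sigma n i"
    and hom: "\<And>l r. sb_rel n l r \<Longrightarrow> word_mat n rho rhoinv l = word_mat n rho rhoinv r"
  shows "\<exists>u v. valid_word n u \<and> valid_word n v \<and> \<not> sb_eq n u v \<and>
           word_mat n rho rhoinv u = word_mat n rho rhoinv v"
proof (intro exI conjI)
  let ?u = "[s 1, s 1, s 2, s 2]" and ?v = "[s 2, s 2, s 1, s 1]"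
  show "valid_word n ?u" "valid_word n ?v" using assms(1) by (auto simp: valid_word_def)
  show "\<not> sb_eq n ?u ?v"
  proof
    assume "sb_eq n ?u ?v"
    then have "wact ?u = wact ?v" by (rule wact_eq)
    then have "wact ?u (\<lambda>k. if k = 3 then 1 else 0) 1 = wact ?v (\<lambda>k. if k = 3 then 1 else 0) 1"
      by simp
    then show False by (simp add: wact_def numeral_eq_Suc)
  qed
  have r1: "rho (Sig 1) = std_sigma n 1" and r2: "rho (Sig 2) = std_sigma n 2"
    using assms(1) std by auto
  have m1: "monom n (std_sigma n 1) (swp 1) (\<lambda>r. if r = 1 - 1 then tt else 1)"
    using assms(1) by (intro monom_sigma) auto
  have m2: "monom n (std_sigma n 2) (swp 2) (\<lambda>r. if r = 2 - 1 then tt else 1)"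
    using assms(1) by (intro monom_sigma) auto
  note mu = monom_mult[OF m1 monom_mult[OF m1 monom_mult[OF m2 monom_mult[OF m2 monom_one]]]]
  note mv = monom_mult[OF m2 monom_mult[OF m2 monom_mult[OF m1 monom_mult[OF m1 monom_one]]]]
  have eu: "word_mat n rho rhoinv ?u = std_sigma n 1 * (std_sigma n 1 * (std_sigma n 2 * (std_sigma n 2 * 1\<^sub>m n)))"
    using r1 r2 by (simp add: word_mat_def del: One_nat_def)
  have ev: "word_mat n rho rhoinv ?v = std_sigma n 2 * (std_sigma n 2 * (std_sigma n 1 * (std_sigma n 1 * 1\<^sub>m n)))"
    using r1 r2 by (simp add: word_mat_def del: One_nat_def)
  show "word_mat n rho rhoinv ?u = word_mat n rho rhoinv ?v"
    unfolding eu ev by (rule monom_unique[OF mu mv]) (auto simp: swp_def)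
qed

end
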